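(* Let $I=(N,A,V)$ be an instance with $n=|N|$ agents and additive valuations with externalities. Suppose there is a set $A^t\subseteq A$ of items all of the same type, with $|A^t|$ divisible by $n$. If the reduced instance $I'=(N,A\setminus A^t,V)$ admits an EF1 complete allocation, then $I$ admits an EF1 complete allocation.
   Context: An allocation $\pi=(\pi_1,\dots,\pi_n)$ consists of pairwise disjoint bundles (complete if they cover the item set); $\pi(a)$ is the agent receiving item $a$; $V_i(j,a)\in\mathbb{R}$ is agent $i$'s value when item $a$ goes to $j$; $V_i(\pi)=\sum_{a\text{ assigned in }\pi}V_i(\pi(a),a)$; $\pi^{i\leftrightarrow j}$ swaps the bundles of $i$ and $j$. A complete allocation $\pi$ is EF1 if for all $i,j\in N$ there exist $C$ with $|C|\le1$ and the allocation $\lambda$ with $\lambda_\ell=\pi_\ell\setminus C$ for all $\ell$ such that $V_i(\lambda)\ge V_i(\lambda^{i\leftrightarrow j})$. Let $\Delta_{ij}(a)=V_i(i,a)-V_i(j,a)$. Two items $a,b$ are of the same type if $\Delta_{ij}(a)=\Delta_{ij}(b)$ for all $i,j\in N$. *)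

theory Defs
  imports Complex_Main
begin

text \<open>Agents of type 'a, items of type 'b. An allocation is a family of bundles
  \<pi> :: 'a => 'b set (only the bundles of agents in N matter).
  V i j a is agent i's value when item a goes to agent j.\<close>

definition is_allocation :: "'a set \<Rightarrow> 'b set \<Rightarrow> ('a \<Rightarrow> 'b set) \<Rightarrow> bool" where
  "is_allocation N A \<pi> \<longleftrightarrow>
     (\<forall>i\<in>N. \<pi> i \<subseteq> A) \<and> (\<forall>i\<in>N. \<forall>j\<in>N. i \<noteq> j \<longrightarrow> \<pi> i \<inter> \<pi> j = {})"

definition complete_alloc :: "'a set \<Rightarrow> 'b set \<Rightarrow> ('a \<Rightarrow> 'b set) \<Rightarrow> bool" where
  "complete_alloc N A \<pi> \<longleftrightarrow> is_allocation N A \<pi> \<and> (\<Union>i\<in>N. \<pi> i) = A"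

definition alloc_val :: "'a set \<Rightarrow> ('a \<Rightarrow> 'a \<Rightarrow> 'b \<Rightarrow> real) \<Rightarrow> 'a \<Rightarrow> ('a \<Rightarrow> 'b set) \<Rightarrow> real" where
  "alloc_val N V i \<pi> = (\<Sum>j\<in>N. \<Sum>a\<in>\<pi> j. V i j a)"

definition swap_bundles :: "('a \<Rightarrow> 'b set) \<Rightarrow> 'a \<Rightarrow> 'a \<Rightarrow> ('a \<Rightarrow> 'b set)" where
  "swap_bundles \<pi> i j = \<pi>(i := \<pi> j, j := \<pi> i)"

definition EF1 :: "'a set \<Rightarrow> ('a \<Rightarrow> 'a \<Rightarrow> 'b \<Rightarrow> real) \<Rightarrow> ('a \<Rightarrow> 'b set) \<Rightarrow> bool" where
  "EF1 N V \<pi> \<longleftrightarrow>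
     (\<forall>i\<in>N. \<forall>j\<in>N. \<exists>C. finite C \<and> card C \<le> 1 \<and>
        (let lam = (\<lambda>l. \<pi> l - C) in
           alloc_val N V i lam \<ge> alloc_val N V i (swap_bundles lam i j)))"

definition Delta :: "('a \<Rightarrow> 'a \<Rightarrow> 'b \<Rightarrow> real) \<Rightarrow> 'a \<Rightarrow> 'a \<Rightarrow> 'b \<Rightarrow> real" where
  "Delta V i j a = V i i a - V i j a"

definition same_type :: "'a set \<Rightarrow> ('a \<Rightarrow> 'a \<Rightarrow> 'b \<Rightarrow> real) \<Rightarrow> 'b \<Rightarrow> 'b \<Rightarrow> bool" where
  "same_type N V a b \<longleftrightarrow> (\<forall>i\<in>N. \<forall>j\<in>N. Delta V i j a = Delta V i j b)"

end

theory Submission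
  imports Defs
begin

lemma swap_diff:
  assumes "finite N" "i \<in> N" "j \<in> N" "i \<noteq> j"
  shows "alloc_val N V i lam - alloc_val N V i (swap_bundles lam i j)
    = (\<Sum>a\<in>lam i. Delta V i j a) - (\<Sum>a\<in>lam j. Delta V i j a)"
proof -
  let ?R = "N - {i, j}"
  have N: "N = insert i (insert j ?R)" using assms by auto
  have fin: "finite ?R" using assms by auto
  have "alloc_val N V i lam = (\<Sum>a\<in>lam i. V i i a) + ((\<Sum>a\<in>lam j. V i j a) + (\<Sum>l\<in>?R. \<Sum>a\<in>lam l. V i l a))"
    unfolding alloc_val_def using assms fin by (subst N, simp)
  moreover have "alloc_val N V i (swap_bundles lam i j) = (\<Sum>a\<in>lam j. V i i a) + ((\<Sum>a\<in>lam i. V i j a) + (\<Sum>l\<in>?R. \<Sum>a\<in>lam l. V i l a))"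
    unfolding alloc_val_def swap_bundles_def using assms fin by (subst N, simp)
  ultimately show ?thesis unfolding Delta_def by (simp add: sum_subtractf)
qed

theorem lemma3:
  fixes N :: "'a set" and A At :: "'b set" and V :: "'a \<Rightarrow> 'a \<Rightarrow> 'b \<Rightarrow> real"
  assumes "finite N" and "finite A"
    and "At \<subseteq> A"
    and "\<forall>a\<in>At. \<forall>b\<in>At. same_type N V a b"
    and "card N dvd card At"
    and "\<exists>\<pi>. complete_alloc N (A - At) \<pi> \<and> EF1 N V \<pi>"
  shows "\<exists>\<pi>. complete_alloc N A \<pi> \<and> EF1 N V \<pi>"
proof -
  obtain \<pi> where ca: "complete_alloc N (A - At) \<pi>" and ef: "EF1 N V \<pi>" using assms(6) by blast
  have finAt: "finite At" using assms(2,3) finite_subset by blast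
  define k where "k = card At div card N"
  have "card (N \<times> {..<k}) = card At" using assms(5) unfolding k_def
    by (simp add: card_cartesian_product)
  then obtain g where g: "bij_betw g (N \<times> {..<k}) At"
    using finite_same_card_bij[of "N \<times> {..<k}" At] assms(1) finAt by auto
  have ginj: "inj_on g (N \<times> {..<k})" and gimg: "g ` (N \<times> {..<k}) = At"
    using g unfolding bij_betw_def by auto
  define T where "T i = g ` ({i} \<times> {..<k})" for i
  define \<pi>' where "\<pi>' i = \<pi> i \<union> T i" for i
  have piA: "\<pi> i \<subseteq> A - At" if "i \<in> N" for i
    using ca that unfolding complete_alloc_def is_allocation_def by auto
  have TAt: "T i \<subseteq> At" if "i \<in> N" for i using that gimg unfolding T_def by auto
  have Tdisj: "T i \<inter> T j = {}" if "i \<in> N" "j \<in> N" "i \<noteq> j" for i j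
    using that ginj unfolding T_def inj_on_def by auto
  have Tun: "(\<Union>i\<in>N. T i) = At" using gimg unfolding T_def by auto
  have same: "Delta V i j a = Delta V i j b" if "i \<in> N" "j \<in> N" "a \<in> At" "b \<in> At" for i j a b
    using assms(4) that unfolding same_type_def by blast
  have Tsum: "(\<Sum>a\<in>T i. Delta V l m a) = (\<Sum>a\<in>T j. Delta V l m a)"
    if "i \<in> N" "j \<in> N" "l \<in> N" "m \<in> N" for i j l m
  proof -
    have "(\<Sum>a\<in>T i. Delta V l m a) = (\<Sum>x\<in>{i} \<times> {..<k}. Delta V l m (g x))"
      unfolding T_def using that by (intro sum.reindex_cong[OF inj_on_subset[OF ginj]]) auto
    also have "\<dots> = (\<Sum>t<k. Delta V l m (g (i, t)))" proof -
      have "{i} \<times> {..<k} = Pair i ` {..<k}" by auto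
      then show ?thesis by (simp only:) (rule sum.reindex_cong[where l="Pair i"], auto simp: inj_on_def)
    qed
    also have "\<dots> = (\<Sum>t<k. Delta V l m (g (j, t)))"
      by (rule sum.cong) (use that gimg same in auto)
    also have "\<dots> = (\<Sum>x\<in>{j} \<times> {..<k}. Delta V l m (g x))" proof -
      have "{j} \<times> {..<k} = Pair j ` {..<k}" by auto
      then show ?thesis by (simp only:) (rule sum.reindex_cong[where l="Pair j", symmetric], auto simp: inj_on_def)
    qed
    also have "\<dots> = (\<Sum>a\<in>T j. Delta V l m a)"
      unfolding T_def using that by (intro sum.reindex_cong[OF inj_on_subset[OF ginj], symmetric]) auto
    finally show ?thesis .
  qed
  have "complete_alloc N A \<pi>'"
  proof -
    have dis1: "\<pi> i \<inter> \<pi> j = {}" if "i \<in> N" "j \<in> N" "i \<noteq> j" for i j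
      using ca that unfolding complete_alloc_def is_allocation_def by auto
    have dis2: "(\<Union>i\<in>N. \<pi> i) = A - At" using ca unfolding complete_alloc_def by auto
    have "\<pi>' i \<subseteq> A" if "i \<in> N" for i
      using piA[OF that] TAt[OF that] assms(3) unfolding \<pi>'_def by blast
    moreover have "\<pi>' i \<inter> \<pi>' j = {}" if "i \<in> N" "j \<in> N" "i \<noteq> j" for i j
    proof -
      have "\<pi> i \<inter> \<pi> j = {}" "T i \<inter> T j = {}" using dis1[OF that] Tdisj[OF that] by auto
      moreover have "\<pi> i \<inter> T j = {}" "T i \<inter> \<pi> j = {}"
        using piA[OF that(1)] TAt[OF that(2)] piA[OF that(2)] TAt[OF that(1)] by blast+
      ultimately show ?thesis unfolding \<pi>'_def by blast
    qed
    moreover have "(\<Union>i\<in>N. \<pi>' i) = A"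
    proof -
      have "(\<Union>i\<in>N. \<pi>' i) = (\<Union>i\<in>N. \<pi> i) \<union> (\<Union>i\<in>N. T i)"
        unfolding \<pi>'_def by blast
      also have "\<dots> = (A - At) \<union> At" using dis2 Tun by simp
      also have "\<dots> = A" using assms(3) by blast
      finally show ?thesis .
    qed
    ultimately show ?thesis unfolding complete_alloc_def is_allocation_def by blast
  qed
  moreover have "EF1 N V \<pi>'"
    unfolding EF1_def
  proof (intro ballI)
    fix i j assume i: "i \<in> N" and j: "j \<in> N"
    show "\<exists>C. finite C \<and> card C \<le> 1 \<and> (let lam = \<lambda>l. \<pi>' l - C in
           alloc_val N V i (swap_bundles lam i j) \<le> alloc_val N V i lam)"
    proof (cases "i = j")
      case True
      then show ?thesis by (intro exI[of _ "{}"]) (simp add: swap_bundles_def)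
    next
      case False
      obtain C where C: "finite C" "card C \<le> 1" and
        ineq: "alloc_val N V i (swap_bundles (\<lambda>l. \<pi> l - C) i j) \<le> alloc_val N V i (\<lambda>l. \<pi> l - C)"
        using ef i j unfolding EF1_def Let_def by blast
      define C' where "C' = C - At"
      have C': "finite C'" "card C' \<le> 1" using C unfolding C'_def
        by (auto intro: le_trans[OF card_mono])
      have eq: "\<pi>' l - C' = (\<pi> l - C) \<union> T l" if "l \<in> N" for l
        using piA[OF that] TAt[OF that] unfolding \<pi>'_def C'_def by auto
      have disj: "(\<pi> l - C) \<inter> T l = {}" if "l \<in> N" for l
        using piA[OF that] TAt[OF that] by auto
      have fin1: "finite (\<pi> l - C)" if "l \<in> N" for l
        using piA[OF that] assms(2) finite_subset by blast
      have fin2: "finite (T l)" if "l \<in> N" for l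
        using TAt[OF that] finAt finite_subset by blast
      have su: "(\<Sum>a\<in>\<pi>' l - C'. Delta V i j a) = (\<Sum>a\<in>\<pi> l - C. Delta V i j a) + (\<Sum>a\<in>T l. Delta V i j a)"
        if "l \<in> N" for l
        using eq[OF that] sum.union_disjoint[OF fin1[OF that] fin2[OF that] disj[OF that]] by simp
      have "alloc_val N V i (\<lambda>l. \<pi>' l - C') - alloc_val N V i (swap_bundles (\<lambda>l. \<pi>' l - C') i j)
          = alloc_val N V i (\<lambda>l. \<pi> l - C) - alloc_val N V i (swap_bundles (\<lambda>l. \<pi> l - C) i j)"
        using swap_diff[OF assms(1) i j False, of V "\<lambda>l. \<pi>' l - C'"]
          swap_diff[OF assms(1) i j False, of V "\<lambda>l. \<pi> l - C"] su[OF i] su[OF j] Tsum[OF i j i j]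
        by simp
      then show ?thesis using C' ineq unfolding Let_def by (intro exI[of _ C']) auto
    qed
  qed
  ultimately show ?thesis by blast
qed

end
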